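(* Let $\phi:\mathcal{F}\to\mathbb{R}$ be any function, $\delta\in(0,1)$, $\epsilon_4:=2B_{\text{ref}}\sqrt{\frac{\log(\delta^{-1})}{2n}}$, $\hat a_-(\epsilon_4):=\min_{f\in\hat{\mathcal{R}}(\epsilon_4)}\phi(f)$ and $\hat a_+(\epsilon_4):=\max_{f\in\hat{\mathcal{R}}(\epsilon_4)}\phi(f)$. Let $f_1\in\mathcal{R}(0)$ be a fixed (not data dependent) model with $|L(f_1,z)-L(f_{\text{ref}},z)|\le B_{\text{ref}}$ for all $z\in\mathcal{Z}$. Then $\mathbb{P}\{\phi(f_1)\in[\hat a_-(\epsilon_4),\hat a_+(\epsilon_4)]\}\ge1-\delta$.
   Context: Let $Z$ be a random variable on $\mathcal{Z}$; $\mathcal{F}$ a set of prediction models; $L:\mathcal{F}\times\mathcal{Z}\to\mathbb{R}_{\ge0}$ a nonnegative loss; data are $n\ge2$ i.i.d. copies $Z_1,\dots,Z_n$ of $Z$. A reference model $f_{\text{ref}}\in\mathcal{F}$ is fixed in advance. $\mathcal{R}(\epsilon)=\{f_{\text{ref}}\}\cup\{f\in\mathcal{F}:\mathbb{E}L(f,Z)\le\mathbb{E}L(f_{\text{ref}},Z)+\epsilon\}$ and $\hat{\mathcal{R}}(\epsilon)=\{f_{\text{ref}}\}\cup\{f\in\mathcal{F}:\frac1n\sum_iL(f,Z_i)\le\frac1n\sum_iL(f_{\text{ref}},Z_i)+\epsilon\}$. The extrema of $\phi$ over $\hat{\mathcal{R}}(\epsilon_4)$ are assumed to be attained. *)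

theory Defs
  imports "HOL-Probability.Probability"
begin

definition Rset :: "'f set \<Rightarrow> ('f \<Rightarrow> 'z \<Rightarrow> real) \<Rightarrow> 'z measure \<Rightarrow> 'f \<Rightarrow> real \<Rightarrow> 'f set" where
  "Rset F L P fref eps = {fref} \<union>
     {f \<in> F. (\<integral>z. L f z \<partial>P) \<le> (\<integral>z. L fref z \<partial>P) + eps}"

definition Rhat :: "'f set \<Rightarrow> ('f \<Rightarrow> 'z \<Rightarrow> real) \<Rightarrow> nat \<Rightarrow> (nat \<Rightarrow> 'z) \<Rightarrow> 'f \<Rightarrow> real \<Rightarrow> 'f set" where
  "Rhat F L n zs fref eps = {fref} \<union>
     {f \<in> F. (\<Sum>i<n. L f (zs i)) / real n \<le> (\<Sum>i<n. L fref (zs i)) / real n + eps}"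

end

theory Submission
  imports Defs
begin

theorem lemmaB4:
  fixes M :: "'w measure" and S :: "'z measure" and P :: "'z measure"
    and Z :: "nat \<Rightarrow> 'w \<Rightarrow> 'z" and n :: nat
    and F :: "'f set" and L :: "'f \<Rightarrow> 'z \<Rightarrow> real" and fref f1 :: 'f
    and \<phi> :: "'f \<Rightarrow> real" and \<delta> B_ref :: real
  assumes "prob_space M"
    and n2: "n \<ge> 2"
    and rv: "\<And>i. i < n \<Longrightarrow> Z i \<in> measurable M S"
    and indep: "prob_space.indep_vars M (\<lambda>_. S) Z {..<n}"
    and ident: "\<And>i. i < n \<Longrightarrow> distr M S (Z i) = P"
    and fref: "fref \<in> F"
    and L_nonneg: "\<And>f z. f \<in> F \<Longrightarrow> z \<in> space S \<Longrightarrow> L f z \<ge> 0"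
    and L_meas: "\<And>f. f \<in> F \<Longrightarrow> L f \<in> borel_measurable S"
    and L_int: "\<And>f. f \<in> F \<Longrightarrow> integrable P (L f)"
    and delta: "0 < \<delta>" "\<delta> < 1"
    and f1: "f1 \<in> F" "f1 \<in> Rset F L P fref 0"
    and bound: "\<And>z. z \<in> space S \<Longrightarrow> \<bar>L f1 z - L fref z\<bar> \<le> B_ref"
    and attained: "\<And>w. w \<in> space M \<Longrightarrow>
       (\<exists>f\<in>Rhat F L n (\<lambda>i. Z i w) fref (2 * B_ref * sqrt (ln (1 / \<delta>) / (2 * real n))).
          \<forall>g\<in>Rhat F L n (\<lambda>i. Z i w) fref (2 * B_ref * sqrt (ln (1 / \<delta>) / (2 * real n))). \<phi> f \<le> \<phi> g)
     \<and> (\<exists>f\<in>Rhat F L n (\<lambda>i. Z i w) fref (2 * B_ref * sqrt (ln (1 / \<delta>) / (2 * real n))).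
          \<forall>g\<in>Rhat F L n (\<lambda>i. Z i w) fref (2 * B_ref * sqrt (ln (1 / \<delta>) / (2 * real n))). \<phi> g \<le> \<phi> f)"
    and event_meas: "{w \<in> space M.
        \<phi> f1 \<in> {Inf (\<phi> ` Rhat F L n (\<lambda>i. Z i w) fref (2 * B_ref * sqrt (ln (1 / \<delta>) / (2 * real n))))
                ..Sup (\<phi> ` Rhat F L n (\<lambda>i. Z i w) fref (2 * B_ref * sqrt (ln (1 / \<delta>) / (2 * real n))))}}
       \<in> sets M"
  shows "measure M {w \<in> space M.
        \<phi> f1 \<in> {Inf (\<phi> ` Rhat F L n (\<lambda>i. Z i w) fref (2 * B_ref * sqrt (ln (1 / \<delta>) / (2 * real n))))
                ..Sup (\<phi> ` Rhat F L n (\<lambda>i. Z i w) fref (2 * B_ref * sqrt (ln (1 / \<delta>) / (2 * real n))))}}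
       \<ge> 1 - \<delta>"
proof -
  interpret prob_space M by fact
  define e where "e = 2 * B_ref * sqrt (ln (1 / \<delta>) / (2 * real n))"
  define R where "R = (\<lambda>w. Rhat F L n (\<lambda>i. Z i w) fref e)"
  define G where "G = {w \<in> space M. \<phi> f1 \<in> {Inf (\<phi> ` R w)..Sup (\<phi> ` R w)}}"
  define X where "X = (\<lambda>i w. L f1 (Z i w) - L fref (Z i w))"
  have Gm: "G \<in> sets M" using event_meas unfolding G_def R_def e_def .
  have npos: "real n > 0" using n2 by simp
  have Zsp: "\<And>i w. i < n \<Longrightarrow> w \<in> space M \<Longrightarrow> Z i w \<in> space S"
    using rv measurable_space by metis
  have good: "w \<in> G" if w: "w \<in> space M" and s: "(\<Sum>i<n. X i w) \<le> real n * e" for w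
  proof -
    have "(\<Sum>i<n. L f1 (Z i w)) - (\<Sum>i<n. L fref (Z i w)) \<le> real n * e"
      using s by (simp add: X_def sum_subtractf)
    hence "(\<Sum>i<n. L f1 (Z i w)) / real n \<le> (\<Sum>i<n. L fref (Z i w)) / real n + e"
      using npos by (simp add: field_simps)
    hence f1R: "f1 \<in> R w" using f1(1) unfolding R_def Rhat_def by auto
    from attained[OF w] obtain fa fb where fa: "fa \<in> R w" "\<forall>g\<in>R w. \<phi> fa \<le> \<phi> g"
      and fb: "fb \<in> R w" "\<forall>g\<in>R w. \<phi> g \<le> \<phi> fb"
      unfolding R_def e_def by blast
    have "bdd_below (\<phi> ` R w)" using fa by (auto simp: bdd_below_def)
    moreover have "bdd_above (\<phi> ` R w)" using fb by (auto simp: bdd_above_def)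
    ultimately show ?thesis using f1R w unfolding G_def
      by (auto intro: cInf_lower cSup_upper)
  qed
  obtain w0 where w0: "w0 \<in> space M" using not_empty by blast
  have "Z 0 w0 \<in> space S" using Zsp[OF _ w0] n2 by simp
  from bound[OF this] have B0: "B_ref \<ge> 0" by simp
  show ?thesis
  proof (cases "B_ref = 0")
    case True
    have "X i w = 0" if "i < n" "w \<in> space M" for i w
      using bound[OF Zsp[OF that]] True by (simp add: X_def)
    hence "G = space M" using good True unfolding e_def by (auto simp: G_def)
    thus ?thesis using prob_space unfolding G_def R_def e_def
      using delta by simp
  next
    case False
    with B0 have Bp: "B_ref > 0" by simp
    have Xm: "\<And>i. i < n \<Longrightarrow> random_variable borel (X i)"
      unfolding X_def using rv L_meas f1(1) fref by measurable
    interpret H: Hoeffding_ineq M "{..<n}" X "\<lambda>_. - B_ref" "\<lambda>_. B_ref" "(\<Sum>i<n. expectation (X i))"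
    proof unfold_locales
      show "indep_vars (\<lambda>_. borel) X {..<n}"
        unfolding X_def
        by (rule indep_vars_compose2[OF indep]) (use L_meas f1(1) fref in measurable)
      fix i assume i: "i \<in> {..<n}"
      show "AE x in M. X i x \<in> {- B_ref..B_ref}"
      proof (intro AE_I2)
        fix x assume "x \<in> space M"
        with bound[OF Zsp[of i x]] i show "X i x \<in> {- B_ref..B_ref}"
          unfolding X_def by (simp add: abs_le_iff)
      qed
    qed auto
    have EX: "expectation (X i) \<le> 0" if i: "i < n" for i
    proof -
      have "expectation (X i) = (\<integral>z. (L f1 z - L fref z) \<partial>P)"
        unfolding X_def ident[OF i, symmetric]
        by (rule integral_distr[symmetric]) (use rv[OF i] L_meas f1(1) fref in measurable)
      also have "\<dots> = (\<integral>z. L f1 z \<partial>P) - (\<integral>z. L fref z \<partial>P)"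
        using L_int f1(1) fref by simp
      also have "\<dots> \<le> 0" using f1(2) unfolding Rset_def by auto
      finally show ?thesis .
    qed
    have mu: "(\<Sum>i<n. expectation (X i)) \<le> 0" using EX by (intro sum_nonpos) auto
    define H where "H = {x\<in>space M. (\<Sum>i<n. X i x) \<ge> (\<Sum>i<n. expectation (X i)) + real n * e}"
    have lnp: "ln (1/\<delta>) > 0" using delta by simp
    have e0: "e \<ge> 0" unfolding e_def using Bp lnp npos by simp
    have esq: "(real n * e)^2 = 2 * real n * B_ref^2 * ln (1/\<delta>)"
    proof -
      have "(real n * e)^2 = real n ^2 * 4 * B_ref^2 * (sqrt (ln (1 / \<delta>) / (2 * real n)))^2"
        unfolding e_def by (simp add: power_mult_distrib)
      also have "\<dots> = real n ^2 * 4 * B_ref^2 * (ln (1 / \<delta>) / (2 * real n))"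
        using lnp npos by simp
      also have "\<dots> = 2 * real n * B_ref^2 * ln (1/\<delta>)"
        using npos by (simp add: field_simps power2_eq_square)
      finally show ?thesis .
    qed
    have sumd: "(\<Sum>i<n. (B_ref - - B_ref)\<^sup>2) = real n * 4 * B_ref^2"
      by (simp add: power2_eq_square)
    have "prob H \<le> exp (-2 * (real n * e)\<^sup>2 / (\<Sum>i<n. (B_ref - - B_ref)\<^sup>2))"
      unfolding H_def by (rule H.Hoeffding_ineq_ge) (use e0 npos Bp in \<open>auto simp: sumd\<close>)
    also have "-2 * (real n * e)\<^sup>2 / (\<Sum>i<n. (B_ref - - B_ref)\<^sup>2) = - ln (1/\<delta>)"
      unfolding sumd esq using npos Bp by (simp add: field_simps)
    also have "exp (- ln (1/\<delta>)) = \<delta>" using delta by (simp add: exp_minus ln_div)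
    finally have pH: "prob H \<le> \<delta>" .
    have Hm: "H \<in> events" unfolding H_def using Xm by measurable
    have "space M - H \<subseteq> G"
    proof
      fix w assume "w \<in> space M - H"
      hence "w \<in> space M" "(\<Sum>i<n. X i w) < (\<Sum>i<n. expectation (X i)) + real n * e"
        unfolding H_def by auto
      thus "w \<in> G" using good mu by auto
    qed
    hence "prob (space M - H) \<le> prob G" using Gm by (intro finite_measure_mono)
    moreover have "prob (space M - H) = 1 - prob H" using Hm by (rule prob_compl)
    ultimately show ?thesis using pH unfolding G_def R_def e_def by simp
  qed
qed

end
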